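(* Let $1\le p\le q$, $n=p+q$, and let $\mu=(a_1,\dots,a_p\mid b_1,\dots,b_q)\in\mathbb{Z}^n$ be $\Delta^+(\mathfrak{k},\mathfrak{t})$-dominant and u-large with $\mu-\beta$ also $\Delta^+(\mathfrak{k},\mathfrak{t})$-dominant. If $a_1\le q$, $b_1\ge p+1$ and $a_1+b_1\ge 2p+q$, then no $\tau\in\Omega_{p,q}$ is $\mu$-deficient. Likewise, if $a_1\ge q+1$, $b_1\le p$ and $a_1+b_1\ge p+2q$, then no $\tau\in\Omega_{p,q}$ is $\mu$-deficient.
   Context: Weights are vectors in $\mathbb{R}^n$ written $(x_1,\dots,x_p\mid y_1,\dots,y_q)$, Euclidean norm $\|\cdot\|$. $\rho_c=(p,\dots,1\mid q,\dots,1)$, $\beta=(1,0,\dots,0\mid1,0,\dots,0)$. $\Delta^+(\mathfrak{k},\mathfrak{t})$-dominant means $x_1\ge\cdots\ge x_p\ge0$, $y_1\ge\cdots\ge y_q\ge0$. For $\nu\in\mathbb{Z}^n$, $\{\nu\}$ is obtained by taking absolute values of all coordinates and sorting the first $p$ and last $q$ coordinates separately in decreasing order; $\|\nu\|_{\mathfrak{k}}=\|\{\nu\}+\rho_c\|$. $\Omega_{p,q}$ is the set of $(x\mid y)\in\mathbb{Z}^n$ with $q\ge x_1\ge\cdots\ge x_p\ge0$ and $y_j=\#\{i\mid q-x_i\ge j\}$ ($1\le j\le q$). $\tau\in\Omega_{p,q}$ is $\mu$-deficient if $\|\mu-\tau\|_{\mathfrak{k}}\le\|\mu-\tau-\beta\|_{\mathfrak{k}}$.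 $\mu$ is u-large iff there exist $0\le f\le p$, $0\le g\le q$ with $\sum_{i=1}^f a_i+\sum_{j=1}^g b_j>2pq-2(p-f)(q-g)$. *)

theory Defs
  imports "HOL-Analysis.Analysis"
begin

text \<open>Weights in Z^n, n = p+q, are represented as integer lists of length p+q:
  the first p entries are x_1..x_p, the last q entries are y_1..y_q.
  Entry x_i is v ! (i-1), entry y_j is v ! (p+j-1).\<close>

definition wadd :: "int list \<Rightarrow> int list \<Rightarrow> int list" where
  "wadd u v = map2 (+) u v"

definition wsub :: "int list \<Rightarrow> int list \<Rightarrow> int list" where
  "wsub u v = map2 (-) u v"

definition wnorm :: "int list \<Rightarrow> real" where
  "wnorm v = sqrt (\<Sum>z\<leftarrow>v. (real_of_int z)^2)"

definition rho_c :: "nat \<Rightarrow> nat \<Rightarrow> int list" where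
  "rho_c p q = map int (rev [1..<p+1]) @ map int (rev [1..<q+1])"

definition beta :: "nat \<Rightarrow> nat \<Rightarrow> int list" where
  "beta p q = (1 # replicate (p-1) 0) @ (1 # replicate (q-1) 0)"

definition dec_nonneg :: "int list \<Rightarrow> bool" where
  "dec_nonneg xs \<longleftrightarrow> sorted_wrt (\<ge>) xs \<and> (\<forall>z\<in>set xs. z \<ge> 0)"

definition k_dominant :: "nat \<Rightarrow> nat \<Rightarrow> int list \<Rightarrow> bool" where
  "k_dominant p q v \<longleftrightarrow> length v = p + q \<and> dec_nonneg (take p v) \<and> dec_nonneg (drop p v)"

definition bracket :: "nat \<Rightarrow> int list \<Rightarrow> int list" where
  "bracket p v = rev (sort (map abs (take p v))) @ rev (sort (map abs (drop p v)))"

definition knorm :: "nat \<Rightarrow> nat \<Rightarrow> int list \<Rightarrow> real" where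
  "knorm p q v = wnorm (wadd (bracket p v) (rho_c p q))"

definition Omega :: "nat \<Rightarrow> nat \<Rightarrow> int list set" where
  "Omega p q = {v. length v = p + q \<and>
      (\<forall>i<p. 0 \<le> v ! i \<and> v ! i \<le> int q) \<and> sorted_wrt (\<ge>) (take p v) \<and>
      (\<forall>j\<in>{1..q}. v ! (p + j - 1) = int (card {i\<in>{1..p}. int q - v ! (i - 1) \<ge> int j}))}"

definition deficient :: "nat \<Rightarrow> nat \<Rightarrow> int list \<Rightarrow> int list \<Rightarrow> bool" where
  "deficient p q \<mu> \<tau> \<longleftrightarrow>
     knorm p q (wsub \<mu> \<tau>) \<le> knorm p q (wsub (wsub \<mu> \<tau>) (beta p q))"

definition u_large :: "nat \<Rightarrow> nat \<Rightarrow> int list \<Rightarrow> bool" where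
  "u_large p q v \<longleftrightarrow> (\<exists>f\<le>p. \<exists>g\<le>q.
     (\<Sum>i=1..f. v ! (i - 1)) + (\<Sum>j=1..g. v ! (p + j - 1))
       > 2 * int p * int q - 2 * (int p - int f) * (int q - int g))"

end

theory Submission
  imports Defs
begin

definition PP :: "int list \<Rightarrow> int" where
  "PP u = (\<Sum>x\<leftarrow>u. \<Sum>y\<leftarrow>u. max x y)"

definition KK :: "int list \<Rightarrow> int" where
  "KK w = (\<Sum>z\<leftarrow>w. z^2) + PP (map abs w) + (\<Sum>z\<leftarrow>w. abs z)"

fun HH :: "int list \<Rightarrow> int" where
  "HH [] = 0"
| "HH (x#t) = (x + int (length t) + 1)^2 + HH t"

definition CC :: "nat \<Rightarrow> int" where
  "CC m = (\<Sum>r\<leftarrow>[1..<m+1]. int r ^ 2)"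

lemma sum_list_mset_eq:
  fixes f :: "'a \<Rightarrow> 'b::comm_monoid_add"
  assumes "mset xs = mset ys"
  shows "sum_list (map f xs) = sum_list (map f ys)"
proof -
  have "sum_list (map f xs) = sum_mset (mset (map f xs))" by (rule sum_mset_sum_list[symmetric])
  also have "\<dots> = sum_mset (mset (map f ys))" using assms by simp
  also have "\<dots> = sum_list (map f ys)" by (rule sum_mset_sum_list)
  finally show ?thesis .
qed

lemma PP_mset:
  assumes "mset u = mset v"
  shows "PP u = PP v"
proof -
  have "\<And>x. (\<Sum>y\<leftarrow>u. max x y) = (\<Sum>y\<leftarrow>v. max x y)"
    using sum_list_mset_eq[OF assms] by blast
  then have "PP u = (\<Sum>x\<leftarrow>u. \<Sum>y\<leftarrow>v. max x y)" unfolding PP_def by simp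
  also have "\<dots> = PP v" unfolding PP_def using sum_list_mset_eq[OF assms] by blast
  finally show ?thesis .
qed

lemma sum_const_list: "(\<Sum>y\<leftarrow>t. (c::int)) = c * int (length t)"
  by (induction t) (auto simp: algebra_simps)

lemma PP_cons: "PP (a#u) = a + 2 * (\<Sum>y\<leftarrow>u. max a y) + PP u"
proof -
  have "PP (a#u) = (a + (\<Sum>y\<leftarrow>u. max a y)) + (\<Sum>x\<leftarrow>u. max x a + (\<Sum>y\<leftarrow>u. max x y))"
    unfolding PP_def by simp
  also have "\<dots> = a + (\<Sum>y\<leftarrow>u. max a y) + (\<Sum>x\<leftarrow>u. max a x) + PP u"
    unfolding PP_def by (simp add: sum_list_addf max.commute)
  finally show ?thesis by simp
qed

lemma H_sorted:
  "sorted_wrt (\<ge>) s \<Longrightarrow> HH s = (\<Sum>z\<leftarrow>s. z^2) + PP s + sum_list s + CC (length s)"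
proof (induction s)
  case Nil
  then show ?case by (simp add: PP_def CC_def)
next
  case (Cons x t)
  have ih: "HH t = (\<Sum>z\<leftarrow>t. z^2) + PP t + sum_list t + CC (length t)"
    using Cons by simp
  have "\<forall>y\<in>set t. y \<le> x" using Cons.prems by simp
  then have "(\<Sum>y\<leftarrow>t. max x y) = (\<Sum>y\<leftarrow>t. x)"
    by (intro arg_cong[where f=sum_list] map_cong) auto
  then have m: "(\<Sum>y\<leftarrow>t. max x y) = x * int (length t)" by (simp add: sum_const_list)
  have c: "CC (length (x#t)) = (int (length t) + 1)^2 + CC (length t)"
    unfolding CC_def by simp
  show ?case using ih m c by (simp add: PP_cons power2_eq_square algebra_simps)
qed

lemma H_zip: "sum_list (map (\<lambda>z. z^2) (map2 (+) s (map int (rev [1..<length s+1])))) = HH s"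
  by (induction s) (auto simp: add.commute add.left_commute)

lemma KK_cons: "KK (c#t) = c^2 + 2*\<bar>c\<bar> + 2*(\<Sum>y\<leftarrow>t. max \<bar>c\<bar> \<bar>y\<bar>) + KK t"
  unfolding KK_def by (simp add: PP_cons o_def)

lemma KK_pos:
  assumes "c \<ge> 1"
  shows "KK ((c-1)#t) + 2*c + 1 \<le> KK (c#t)"
proof -
  have "(\<Sum>y\<leftarrow>t. max \<bar>c-1\<bar> \<bar>y\<bar>) \<le> (\<Sum>y\<leftarrow>t. max \<bar>c\<bar> \<bar>y\<bar>)"
    using assms by (intro sum_list_mono) auto
  then show ?thesis using assms unfolding KK_cons by (simp add: power2_eq_square algebra_simps)
qed

lemma KK_nonpos:
  assumes "c \<le> 0"
  shows "KK ((c-1)#t) \<le> KK (c#t) + 2*(-c) + 1 + 2*int (length t + 1)"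
proof -
  have "(\<Sum>y\<leftarrow>t. max \<bar>c-1\<bar> \<bar>y\<bar>) \<le> (\<Sum>y\<leftarrow>t. max \<bar>c\<bar> \<bar>y\<bar> + 1)"
    using assms by (intro sum_list_mono) auto
  also have "\<dots> = (\<Sum>y\<leftarrow>t. max \<bar>c\<bar> \<bar>y\<bar>) + int (length t)"
    by (simp add: sum_list_addf sum_const_list)
  finally show ?thesis using assms unfolding KK_cons by (simp add: power2_eq_square algebra_simps)
qed

lemma KK_bracket:
  "KK w = (\<Sum>z\<leftarrow>rev (sort (map abs w)). z^2) + PP (rev (sort (map abs w)))
     + sum_list (rev (sort (map abs w)))"
proof -
  have ms: "mset (rev (sort (map abs w))) = mset (map abs w)" by simp
  have 1: "(\<Sum>z\<leftarrow>rev (sort (map abs w)). z^2) = (\<Sum>z\<leftarrow>map abs w. z^2)"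
    using sum_list_mset_eq[OF ms] by blast
  have 2: "sum_list (rev (sort (map abs w))) = sum_list (map abs w)"
    using sum_list_mset_eq[OF ms, of id] by simp
  show ?thesis unfolding KK_def 1 2 PP_mset[OF ms] by (simp add: o_def)
qed

lemma HH_bracket:
  "HH (rev (sort (map abs w))) = KK w + CC (length w)"
proof -
  have "sorted_wrt (\<ge>) (rev (sort (map abs w)))" by (simp add: sorted_wrt_rev)
  from H_sorted[OF this] show ?thesis using KK_bracket[of w] by simp
qed

lemma knorm_KK:
  assumes "length v = p + q"
  shows "knorm p q v = sqrt (real_of_int (KK (take p v) + KK (drop p v) + CC p + CC q))"
proof -
  define s1 where "s1 = rev (sort (map abs (take p v)))"
  define s2 where "s2 = rev (sort (map abs (drop p v)))"
  have l1: "length s1 = p" using assms unfolding s1_def by simp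
  have l2: "length s2 = q" using assms unfolding s2_def by simp
  have w: "wadd (bracket p v) (rho_c p q) =
      map2 (+) s1 (map int (rev [1..<length s1+1])) @ map2 (+) s2 (map int (rev [1..<length s2+1]))"
    unfolding wadd_def bracket_def rho_c_def s1_def[symmetric] s2_def[symmetric] l1 l2
    using l1 by (simp add: zip_append)
  have "(\<Sum>z\<leftarrow>wadd (bracket p v) (rho_c p q). z^2) = HH s1 + HH s2"
    unfolding w map_append sum_list_append H_zip by simp
  also have "\<dots> = KK (take p v) + KK (drop p v) + CC p + CC q"
    unfolding s1_def s2_def HH_bracket using assms by simp
  finally have e: "(\<Sum>z\<leftarrow>wadd (bracket p v) (rho_c p q). z^2) = KK (take p v) + KK (drop p v) + CC p + CC q" .
  have "(\<Sum>z\<leftarrow>wadd (bracket p v) (rho_c p q). (real_of_int z)^2)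
        = real_of_int (\<Sum>z\<leftarrow>wadd (bracket p v) (rho_c p q). z^2)"
    by (simp add: sum_list_of_int[symmetric] o_def)
  then show ?thesis unfolding knorm_def wnorm_def e by simp
qed

lemma beta_nth:
  assumes "1 \<le> p" "1 \<le> q" "i < p + q"
  shows "beta p q ! i = (if i = 0 \<or> i = p then 1 else 0)"
proof -
  have "length (1 # replicate (p-1) (0::int)) = p" using assms by simp
  then show ?thesis using assms unfolding beta_def
    by (auto simp: nth_append nth_Cons' nth_replicate)
qed

lemma wsub_nth: "i < length u \<Longrightarrow> i < length v \<Longrightarrow> wsub u v ! i = u ! i - v ! i"
  unfolding wsub_def by simp

lemma length_wsub: "length (wsub u v) = min (length u) (length v)"
  unfolding wsub_def by simp

lemma length_beta: "1 \<le> p \<Longrightarrow> 1 \<le> q \<Longrightarrow> length (beta p q) = p + q"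
  unfolding beta_def by simp

lemma take_sub_beta:
  assumes "1 \<le> p" "1 \<le> q" "length v = p + q"
  shows "take p (wsub v (beta p q)) = (v!0 - 1) # tl (take p v)"
        "take p v = v!0 # tl (take p v)"
proof -
  have ne: "take p v \<noteq> []" using assms by (auto simp: take_eq_Nil)
  then have "take p v = hd (take p v) # tl (take p v)" by (rule hd_Cons_tl[symmetric])
  moreover have "hd (take p v) = v!0" using ne assms by (simp add: hd_conv_nth)
  ultimately show e: "take p v = v!0 # tl (take p v)" by simp
  have lw: "length (wsub v (beta p q)) = p + q" using assms length_beta[OF assms(1,2)] by (simp add: length_wsub)
  show "take p (wsub v (beta p q)) = (v!0 - 1) # tl (take p v)"
  proof (rule nth_equalityI)
    show "length (take p (wsub v (beta p q))) = length ((v!0 - 1) # tl (take p v))"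
      using lw assms by simp
    fix i assume "i < length (take p (wsub v (beta p q)))"
    then have i: "i < p" using lw by simp
    have w: "take p (wsub v (beta p q)) ! i = v!i - beta p q ! i"
      using i assms lw length_beta[OF assms(1,2)] by (simp add: wsub_nth)
    show "take p (wsub v (beta p q)) ! i = ((v!0 - 1) # tl (take p v)) ! i"
    proof (cases i)
      case 0
      then show ?thesis using w beta_nth[OF assms(1,2), of 0] assms by simp
    next
      case (Suc k)
      have "beta p q ! i = 0" using beta_nth[OF assms(1,2), of i] i Suc assms by simp
      moreover have "tl (take p v) ! k = v ! i" using i Suc assms by (simp add: nth_tl)
      ultimately show ?thesis using w Suc by simp
    qed
  qed
qed

lemma drop_sub_beta:
  assumes "1 \<le> p" "1 \<le> q" "length v = p + q"
  shows "drop p (wsub v (beta p q)) = (v!p - 1) # tl (drop p v)"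
        "drop p v = v!p # tl (drop p v)"
proof -
  have ne: "drop p v \<noteq> []" using assms by simp
  then have "drop p v = hd (drop p v) # tl (drop p v)" by (rule hd_Cons_tl[symmetric])
  moreover have "hd (drop p v) = v!p" using ne assms by (simp add: hd_drop_conv_nth)
  ultimately show e: "drop p v = v!p # tl (drop p v)" by simp
  have lw: "length (wsub v (beta p q)) = p + q" using assms length_beta[OF assms(1,2)] by (simp add: length_wsub)
  show "drop p (wsub v (beta p q)) = (v!p - 1) # tl (drop p v)"
  proof (rule nth_equalityI)
    show "length (drop p (wsub v (beta p q))) = length ((v!p - 1) # tl (drop p v))"
      using lw assms by simp
    fix i assume "i < length (drop p (wsub v (beta p q)))"
    then have i: "i < q" using lw by simp
    have w: "drop p (wsub v (beta p q)) ! i = v!(p+i) - beta p q ! (p+i)"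
      using i assms lw length_beta[OF assms(1,2)] by (simp add: wsub_nth)
    show "drop p (wsub v (beta p q)) ! i = ((v!p - 1) # tl (drop p v)) ! i"
    proof (cases i)
      case 0
      then show ?thesis using w beta_nth[OF assms(1,2), of p] assms by simp
    next
      case (Suc k)
      have "beta p q ! (p+i) = 0" using beta_nth[OF assms(1,2), of "p+i"] i Suc assms by simp
      moreover have "tl (drop p v) ! k = v ! (p+i)" using i Suc assms by (simp add: nth_tl)
      ultimately show ?thesis using w Suc by simp
    qed
  qed
qed

lemma KK_change:
  assumes "1 \<le> p" "1 \<le> q" "length v = p + q"
  shows "KK (take p (wsub v (beta p q))) \<le> KK (take p v) + (if v!0 \<ge> 1 then - (2*(v!0)+1) else 2*(- (v!0))+1+2*int p)"
    and "KK (drop p (wsub v (beta p q))) \<le> KK (drop p v) + (if v!p \<ge> 1 then - (2*(v!p)+1) else 2*(- (v!p))+1+2*int q)"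
proof -
  have lt: "length (tl (take p v)) + 1 = p" using assms by simp
  have ld: "length (tl (drop p v)) + 1 = q" using assms by simp
  have e1: "take p (wsub v (beta p q)) = (v!0 - 1) # tl (take p v)"
   and e2: "take p v = v!0 # tl (take p v)" using take_sub_beta[OF assms] by blast+
  have e3: "drop p (wsub v (beta p q)) = (v!p - 1) # tl (drop p v)"
   and e4: "drop p v = v!p # tl (drop p v)" using drop_sub_beta[OF assms] by blast+
  have "KK ((v!0 - 1) # tl (take p v)) \<le> KK (v!0 # tl (take p v)) + (if v!0 \<ge> 1 then - (2*(v!0)+1) else 2*(- (v!0))+1+2*int p)"
    using KK_pos[of "v!0" "tl (take p v)"] KK_nonpos[of "v!0" "tl (take p v)"] lt
    by (cases "v!0 \<ge> 1") auto
  then show "KK (take p (wsub v (beta p q))) \<le> KK (take p v) + (if v!0 \<ge> 1 then - (2*(v!0)+1) else 2*(- (v!0))+1+2*int p)"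
    using e1 e2 by metis
  have "KK ((v!p - 1) # tl (drop p v)) \<le> KK (v!p # tl (drop p v)) + (if v!p \<ge> 1 then - (2*(v!p)+1) else 2*(- (v!p))+1+2*int q)"
    using KK_pos[of "v!p" "tl (drop p v)"] KK_nonpos[of "v!p" "tl (drop p v)"] ld
    by (cases "v!p \<ge> 1") auto
  then show "KK (drop p (wsub v (beta p q))) \<le> KK (drop p v) + (if v!p \<ge> 1 then - (2*(v!p)+1) else 2*(- (v!p))+1+2*int q)"
    using e3 e4 by metis
qed

lemma Omega_facts:
  assumes "1 \<le> p" "\<tau> \<in> Omega p q" "1 \<le> q"
  shows "length \<tau> = p + q" "0 \<le> \<tau>!0" "\<tau>!0 \<le> int q" "\<tau>!p \<le> int p" "\<tau>!0 + \<tau>!p \<le> int p + int q - 1"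
proof -
  show "length \<tau> = p + q" using assms unfolding Omega_def by simp
  show "0 \<le> \<tau>!0" "\<tau>!0 \<le> int q" using assms unfolding Omega_def by auto
  have "\<tau>!p \<le> int p \<and> \<tau>!0 + \<tau>!p \<le> int p + int q - 1"
  proof -
    have False: "q \<noteq> 0" using assms by simp
    define S where "S = {i\<in>{1..p}. int q - \<tau> ! (i - 1) \<ge> int 1}"
    have all: "\<forall>j\<in>{1..q}. \<tau>!(p+j-1) = int (card {i\<in>{1..p}. int q - \<tau>!(i-1) \<ge> int j})"
      using assms unfolding Omega_def by blast
    have "\<tau>!(p+1-1) = int (card {i\<in>{1..p}. int q - \<tau>!(i-1) \<ge> int 1})"
      using bspec[OF all, of 1] False by simp
    then have tp: "\<tau>!p = int (card S)" unfolding S_def by simp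
    have "S \<subseteq> {1..p}" unfolding S_def by auto
    then have c1: "card S \<le> p" using card_mono[of "{1..p}" S] by simp
    have "S \<subseteq> {2..p}" if a: "\<tau>!0 = int q"
    proof
      fix x assume x: "x \<in> S"
      then have "x \<noteq> 1" using a unfolding S_def by auto
      then show "x \<in> {2..p}" using x unfolding S_def by auto
    qed
    then have c2: "\<tau>!0 = int q \<Longrightarrow> card S \<le> p - 1" using card_mono[of "{2..p}" S] by simp
    show ?thesis using c1 c2 tp \<open>\<tau>!0 \<le> int q\<close> assms(1) by (cases "\<tau>!0 = int q") auto
  qed
  then show "\<tau>!p \<le> int p" "\<tau>!0 + \<tau>!p \<le> int p + int q - 1" by auto
qed

theorem mainTheorem9:
  fixes p q :: nat and \<mu> :: "int list"
  assumes "1 \<le> p" and "p \<le> q"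
    and "length \<mu> = p + q"
    and "k_dominant p q \<mu>"
    and "u_large p q \<mu>"
    and "k_dominant p q (wsub \<mu> (beta p q))"
  shows "(\<mu> ! 0 \<le> int q \<and> \<mu> ! p \<ge> int p + 1 \<and> \<mu> ! 0 + \<mu> ! p \<ge> 2 * int p + int q
            \<longrightarrow> (\<forall>\<tau>\<in>Omega p q. \<not> deficient p q \<mu> \<tau>))
       \<and> (\<mu> ! 0 \<ge> int q + 1 \<and> \<mu> ! p \<le> int p \<and> \<mu> ! 0 + \<mu> ! p \<ge> int p + 2 * int q
            \<longrightarrow> (\<forall>\<tau>\<in>Omega p q. \<not> deficient p q \<mu> \<tau>))"
proof -
  have q1: "1 \<le> q" using assms by simp
  have key: "\<not> deficient p q \<mu> \<tau>"
    if t: "\<tau> \<in> Omega p q" and h: "(\<mu> ! p \<ge> int p + 1 \<and> \<mu> ! 0 + \<mu> ! p \<ge> 2 * int p + int q) \<or>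
            (\<mu> ! 0 \<ge> int q + 1 \<and> \<mu> ! 0 + \<mu> ! p \<ge> int p + 2 * int q)" for \<tau>
  proof -
    note of = Omega_facts[OF assms(1) t q1]
    define v where "v = wsub \<mu> \<tau>"
    have lv: "length v = p + q" unfolding v_def length_wsub using of assms by simp
    have v0: "v!0 = \<mu>!0 - \<tau>!0" unfolding v_def using of assms by (simp add: wsub_nth)
    have vp: "v!p = \<mu>!p - \<tau>!p" unfolding v_def using of assms q1 by (simp add: wsub_nth)
    note ch = KK_change[OF assms(1) q1 lv]
    have lw: "length (wsub v (beta p q)) = p + q" using lv length_beta[OF assms(1) q1] by (simp add: length_wsub)
    have "KK (take p (wsub v (beta p q))) + KK (drop p (wsub v (beta p q))) < KK (take p v) + KK (drop p v)"
      using ch h of v0 vp assms(2) by (auto split: if_splits)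
    then have "knorm p q (wsub v (beta p q)) < knorm p q v"
      unfolding knorm_KK[OF lv] knorm_KK[OF lw] by simp
    then show ?thesis unfolding deficient_def v_def by simp
  qed
  show ?thesis using key by auto
qed

end
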